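(* If $\mathcal I$ is a P-ideal on $\omega$, then $\mathfrak b_\sigma(\mathcal I)=\mathfrak b_s(\mathrm{Fin},\mathcal I,\mathcal I)=\min\{\mathfrak b,\mathrm{add}^*(\mathcal I)\}\le\mathrm{add}_\omega(\mathcal I)$.
   Context: An ideal on $\omega$ is a family $\mathcal I\subseteq\mathcal P(\omega)$ closed under finite unions and subsets, containing all finite sets, with $\omega\notin\mathcal I$; $\mathrm{Fin}$ is the ideal of finite subsets of $\omega$. $\mathcal I$ is a P-ideal if for every countable $\mathcal A\subseteq\mathcal I$ there is $B\in\mathcal I$ with $A\setminus B$ finite for all $A\in\mathcal A$. $\mathfrak b$ is the least size of a subset of $\omega^\omega$ unbounded with respect to eventual domination $\le^*$. Convention $\min\emptyset=\infty$, $\kappa<\infty$ for every cardinal. $\widehat{\mathcal P}_{\mathcal I}$ = sequences $(A_n)\in\mathcal I^\omega$ of pairwise disjoint sets; $\mathcal P_{\mathcal I}$ = those with $\bigcup_nA_n=\omega$; $\mathcal M_{\mathcal I}$ = sequences $(E_k)\in\mathcal I^\omega$ with $E_k\subseteq E_{k+1}$. $\mathfrak b_s(\mathcal I,\mathcal J,\mathcal K)=\min\{|\mathcal E|:\mathcal E\subseteq\widehat{\mathcal P}_{\mathcal K}$ and for every $(A_n)\in\mathcal P_{\mathcal J}$ there is $(E_n)\in\mathcal E$ with $\bigcup_n(A_{n+1}\cap\bigcup_{i\le n}E_i)\notin\mathcal I\}$; $\mathfrak b_\sigma(\mathcal I)=\min\{|\mathcal E|:\mathcal E\subseteq\mathcal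 M_{\mathcal I}$ and for every $(A_n)\in\mathcal M_{\mathcal I}$ there is $(E_n)\in\mathcal E$ with $E_n\not\subseteq A_n$ for infinitely many $n\}$; $\mathrm{add}_\omega(\mathcal I)=\min\{|\mathcal A|:\mathcal A\subseteq\mathcal I$ and for every $(B_n)\in\mathcal I^\omega$ there is $A\in\mathcal A$ with $A\not\subseteq B_n$ for all $n\}$; $\mathrm{add}^*(\mathcal I)=\min\{|\mathcal A|:\mathcal A\subseteq\mathcal I$ and for every $B\in\mathcal I$ there is $A\in\mathcal A$ with $A\setminus B$ infinite$\}$. *)

theory Defs
  imports Main "HOL-Library.Countable_Set"
begin

definition ideal_on_nat :: "nat set set \<Rightarrow> bool" where
  "ideal_on_nat I \<longleftrightarrow>
     (\<forall>A\<in>I. \<forall>B\<in>I. A \<union> B \<in> I) \<and>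
     (\<forall>A\<in>I. \<forall>B. B \<subseteq> A \<longrightarrow> B \<in> I) \<and>
     (\<forall>A. finite A \<longrightarrow> A \<in> I) \<and>
     UNIV \<notin> I"

definition Fin :: "nat set set" where
  "Fin = {A. finite A}"

definition P_ideal :: "nat set set \<Rightarrow> bool" where
  "P_ideal I \<longleftrightarrow> ideal_on_nat I \<and>
     (\<forall>\<A>. countable \<A> \<and> \<A> \<subseteq> I \<longrightarrow> (\<exists>B\<in>I. \<forall>A\<in>\<A>. finite (A - B)))"

definition Phat :: "nat set set \<Rightarrow> (nat \<Rightarrow> nat set) set" where
  "Phat K = {A. (\<forall>n. A n \<in> K) \<and> (\<forall>n m. n \<noteq> m \<longrightarrow> A n \<inter> A m = {})}"

definition Ppart :: "nat set set \<Rightarrow> (nat \<Rightarrow> nat set) set" where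
  "Ppart K = {A. A \<in> Phat K \<and> (\<Union>n. A n) = UNIV}"

definition Mseq :: "nat set set \<Rightarrow> (nat \<Rightarrow> nat set) set" where
  "Mseq I = {E. (\<forall>k. E k \<in> I) \<and> (\<forall>k. E k \<subseteq> E (Suc k))}"

text \<open>Each cardinal invariant is the minimum of the cardinalities of the families in its
  witness class (min of empty class = infinity).\<close>

definition le_star :: "(nat \<Rightarrow> nat) \<Rightarrow> (nat \<Rightarrow> nat) \<Rightarrow> bool" where
  "le_star f g \<longleftrightarrow> (\<exists>N. \<forall>n\<ge>N. f n \<le> g n)"

definition b_wit :: "(nat \<Rightarrow> nat) set set" where
  "b_wit = {F. \<not> (\<exists>g. \<forall>f\<in>F. le_star f g)}"

definition bs_wit :: "nat set set \<Rightarrow> nat set set \<Rightarrow> nat set set \<Rightarrow> (nat \<Rightarrow> nat set) set set" where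
  "bs_wit I J K = {\<E>. \<E> \<subseteq> Phat K \<and>
     (\<forall>A\<in>Ppart J. \<exists>E\<in>\<E>. (\<Union>n. A (Suc n) \<inter> (\<Union>i\<le>n. E i)) \<notin> I)}"

definition bsigma_wit :: "nat set set \<Rightarrow> (nat \<Rightarrow> nat set) set set" where
  "bsigma_wit I = {\<E>. \<E> \<subseteq> Mseq I \<and>
     (\<forall>A\<in>Mseq I. \<exists>E\<in>\<E>. infinite {n. \<not> E n \<subseteq> A n})}"

definition addomega_wit :: "nat set set \<Rightarrow> nat set set set" where
  "addomega_wit I = {\<A>. \<A> \<subseteq> I \<and>
     (\<forall>B. (\<forall>n. B n \<in> I) \<longrightarrow> (\<exists>A\<in>\<A>. \<forall>n::nat. \<not> A \<subseteq> B n))}"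

definition addstar_wit :: "nat set set \<Rightarrow> nat set set set" where
  "addstar_wit I = {\<A>. \<A> \<subseteq> I \<and> (\<forall>B\<in>I. \<exists>A\<in>\<A>. infinite (A - B))}"

text \<open>inv_le W1 W2 says min{|E| : E in W1} <= min{|E| : E in W2}, with min of the empty
  class being infinity (larger than every cardinal).\<close>

definition inv_le :: "'a set set \<Rightarrow> 'b set set \<Rightarrow> bool" where
  "inv_le W1 W2 \<longleftrightarrow> (\<forall>E\<in>W2. \<exists>E'\<in>W1. (card_of E', card_of E) \<in> ordLeq)"

definition inv_eq :: "'a set set \<Rightarrow> 'b set set \<Rightarrow> bool" where
  "inv_eq W1 W2 \<longleftrightarrow> inv_le W1 W2 \<and> inv_le W2 W1"

text \<open>Witness class whose minimum is min of the two minima (disjoint-union lift).\<close>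

definition inv_min :: "'a set set \<Rightarrow> 'b set set \<Rightarrow> ('a + 'b) set set" where
  "inv_min W1 W2 = (\<lambda>E. Inl ` E) ` W1 \<union> (\<lambda>E. Inr ` E) ` W2"

end

theory Submission
  imports Defs
begin

lemma idealD:
  assumes "ideal_on_nat I"
  shows "\<And>A B. A \<in> I \<Longrightarrow> B \<in> I \<Longrightarrow> A \<union> B \<in> I"
    and "\<And>A B. A \<in> I \<Longrightarrow> B \<subseteq> A \<Longrightarrow> B \<in> I"
    and "\<And>A. finite A \<Longrightarrow> A \<in> I"
    and "UNIV \<notin> I"
  using assms unfolding ideal_on_nat_def by blast+

lemma ideal_UN_atMost:
  fixes C :: "nat \<Rightarrow> nat set" and n :: nat
  assumes "ideal_on_nat I" "\<And>i. C i \<in> I"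
  shows "(\<Union>i\<le>n. C i) \<in> I"
proof (induction n)
  case 0 then show ?case using assms by simp
next
  case (Suc n)
  have "(\<Union>i\<le>Suc n. C i) = C (Suc n) \<union> (\<Union>i\<le>n. C i)" by (auto simp: atMost_Suc)
  then show ?case using Suc idealD(1)[OF assms(1)] assms(2) by simp
qed

definition disj :: "(nat \<Rightarrow> nat set) \<Rightarrow> nat \<Rightarrow> nat set" where
  "disj S n = (case n of 0 \<Rightarrow> S 0 | Suc m \<Rightarrow> S (Suc m) - S m)"

lemma disj_sub: "disj S n \<subseteq> S n"
  by (cases n) (auto simp: disj_def)

lemma mono_le:
  assumes "\<And>n. S n \<subseteq> S (Suc n)" "n \<le> m"
  shows "S n \<subseteq> (S m :: nat set)"
  using assms(2)
proof (induction m)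
  case 0 then show ?case by simp
next
  case (Suc m) then show ?case using assms(1)[of m] by (cases "n = Suc m") auto
qed

lemma disj_Un:
  assumes "\<And>n. S n \<subseteq> S (Suc n)"
  shows "(\<Union>i\<le>n. disj S i) = S n"
proof (induction n)
  case 0 then show ?case by (simp add: disj_def)
next
  case (Suc n)
  have "(\<Union>i\<le>Suc n. disj S i) = disj S (Suc n) \<union> (\<Union>i\<le>n. disj S i)" by (auto simp: atMost_Suc)
  then show ?case using Suc assms[of n] by (auto simp: disj_def)
qed

lemma disj_disjoint:
  assumes "\<And>n. S n \<subseteq> S (Suc n)" "n \<noteq> m"
  shows "disj S n \<inter> disj S m = {}"
proof -
  have *: "disj S a \<inter> disj S b = {}" if "a < b" for a b
  proof -
    obtain k where k: "b = Suc k" using \<open>a < b\<close> by (cases b) auto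
    have "S a \<subseteq> S k" using mono_le[of S, OF assms(1)] that k by simp
    then show ?thesis using disj_sub[of S a] k by (auto simp: disj_def)
  qed
  show ?thesis using assms(2) *[of n m] *[of m n] by (cases "n < m") auto
qed

lemma key:
  fixes X :: "'x set" and s :: "'x \<Rightarrow> nat \<Rightarrow> nat set"
  assumes P: "P_ideal I" and sI: "\<forall>x\<in>X. \<forall>n. s x n \<in> I"
  shows "(\<exists>F\<in>b_wit. (card_of F, card_of X) \<in> ordLeq)
       \<or> (\<exists>\<A>\<in>addstar_wit I. (card_of \<A>, card_of X) \<in> ordLeq)
       \<or> (\<exists>B\<in>I. \<exists>g. (\<forall>n. g n \<le> g (Suc n)) \<and> (\<forall>n. n \<le> g n) \<and>
             (\<forall>x\<in>X. \<exists>N. \<forall>n\<ge>N. s x n \<subseteq> B \<union> {..g n}))"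
proof -
  define \<A> where "\<A> = (\<lambda>(x,n). s x n) ` (X \<times> (UNIV::nat set))"
  have AI: "\<A> \<subseteq> I" using sI unfolding \<A>_def by auto
  have "(\<exists>B\<in>I. \<forall>A\<in>\<A>. finite (A - B)) \<or> (\<A> \<in> addstar_wit I \<and> (card_of \<A>, card_of X) \<in> ordLeq)"
  proof (cases "finite X")
    case True
    then have "countable \<A>" unfolding \<A>_def by (simp add: countable_finite)
    then show ?thesis using P AI unfolding P_ideal_def by blast
  next
    case False
    show ?thesis
    proof (cases "\<exists>B\<in>I. \<forall>A\<in>\<A>. finite (A - B)")
      case True then show ?thesis by blast
    next
      case nB: False
      have "\<A> \<in> addstar_wit I" using nB AI unfolding addstar_wit_def by blast
      moreover have "(card_of \<A>, card_of (X \<times> (UNIV::nat set))) \<in> ordLeq"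
        unfolding \<A>_def by (rule card_of_image)
      moreover have "(card_of (X \<times> (UNIV::nat set)), card_of X) \<in> ordIso"
        using card_of_Times_infinite[of X "UNIV::nat set"] False infinite_iff_card_of_nat by blast
      ultimately show ?thesis using ordLeq_ordIso_trans by blast
    qed
  qed
  moreover
  {
    fix B assume BI: "B \<in> I" and fin: "\<forall>A\<in>\<A>. finite (A - B)"
    define f where "f x n = Max (insert 0 (s x n - B))" for x n
    have finx: "finite (s x n - B)" if "x \<in> X" for x n
      using fin that unfolding \<A>_def by auto
    have ?thesis
    proof (cases "f ` X \<in> b_wit")
      case True
      then show ?thesis using card_of_image by blast
    next
      case False
      then obtain g where g: "\<forall>h\<in>f ` X. le_star h g" unfolding b_wit_def by blast
      define g' where "g' n = (\<Sum>i\<le>n. g i) + n" for n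
      have g'm: "\<forall>n. g' n \<le> g' (Suc n)" unfolding g'_def by simp
      have g'n: "\<forall>n. n \<le> g' n" unfolding g'_def by simp
      have gg: "g n \<le> g' n" for n
      proof -
        have "g n \<le> (\<Sum>i\<le>n. g i)" by (rule member_le_sum) auto
        then show ?thesis unfolding g'_def by simp
      qed
      have "\<exists>N. \<forall>n\<ge>N. s x n \<subseteq> B \<union> {..g' n}" if x: "x \<in> X" for x
      proof -
        obtain N where N: "\<forall>n\<ge>N. f x n \<le> g n" using g x unfolding le_star_def by blast
        have "s x n \<subseteq> B \<union> {..g' n}" if "n \<ge> N" for n
        proof
          fix y assume y: "y \<in> s x n"
          show "y \<in> B \<union> {..g' n}"
          proof (cases "y \<in> B")
            case False
            then have "y \<le> f x n" unfolding f_def using finx[OF x, of n] y by (intro Max_ge) auto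
            then show ?thesis using N that gg[of n] by auto
          qed simp
        qed
        then show ?thesis by blast
      qed
      then show ?thesis using BI g'm g'n by blast
    qed
  }
  ultimately show ?thesis by blast
qed

lemma Inl_card: "(card_of F, card_of X) \<in> ordLeq \<Longrightarrow> (card_of (Inl ` F :: ('a + 'b) set), card_of X) \<in> ordLeq"
  using card_of_image ordLeq_transitive by blast

lemma Inr_card: "(card_of F, card_of X) \<in> ordLeq \<Longrightarrow> (card_of (Inr ` F :: ('a + 'b) set), card_of X) \<in> ordLeq"
  using card_of_image ordLeq_transitive by blast

lemma m_le_sigma:
  assumes P: "P_ideal I"
  shows "inv_le (inv_min b_wit (addstar_wit I)) (bsigma_wit I)"
  unfolding inv_le_def
proof
  fix \<E> assume E: "\<E> \<in> bsigma_wit I"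
  have id: "ideal_on_nat I" using P unfolding P_ideal_def by blast
  have sI: "\<forall>x\<in>\<E>. \<forall>n. x n \<in> I" using E unfolding bsigma_wit_def Mseq_def by blast
  from key[OF P sI]
  consider (b) F where "F \<in> b_wit" "(card_of F, card_of \<E>) \<in> ordLeq"
    | (a) \<A> where "\<A> \<in> addstar_wit I" "(card_of \<A>, card_of \<E>) \<in> ordLeq"
    | (c) B g where "B \<in> I" "\<forall>n. g n \<le> g (Suc n)" "\<forall>x\<in>\<E>. \<exists>N. \<forall>n\<ge>N. x n \<subseteq> B \<union> {..g n}"
    by blast
  then show "\<exists>E'\<in>inv_min b_wit (addstar_wit I). (card_of E', card_of \<E>) \<in> ordLeq"
  proof cases
    case b then show ?thesis using Inl_card unfolding inv_min_def by blast
  next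
    case a then show ?thesis using Inr_card unfolding inv_min_def by blast
  next
    case c
    define A where "A n = B \<union> {..g n}" for n
    have "A \<in> Mseq I"
    proof -
      have "A k \<in> I" for k unfolding A_def using c idealD(1,3)[OF id] by simp
      moreover have "A k \<subseteq> A (Suc k)" for k unfolding A_def using c(2)[rule_format, of k] by auto
      ultimately show ?thesis unfolding Mseq_def by blast
    qed
    then obtain x where x: "x \<in> \<E>" "infinite {n. \<not> x n \<subseteq> A n}"
      using E unfolding bsigma_wit_def by blast
    obtain N where "\<forall>n\<ge>N. x n \<subseteq> B \<union> {..g n}" using c x by blast
    then have "{n. \<not> x n \<subseteq> A n} \<subseteq> {..<N}" unfolding A_def by (auto simp: not_less)
    then show ?thesis using x finite_subset by blast
  qed
qed


lemma m_le_s: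
  assumes P: "P_ideal I"
  shows "inv_le (inv_min b_wit (addstar_wit I)) (bs_wit Fin I I)"
  unfolding inv_le_def
proof
  fix \<E> assume E: "\<E> \<in> bs_wit Fin I I"
  have id: "ideal_on_nat I" using P unfolding P_ideal_def by blast
  have EI: "\<forall>x\<in>\<E>. \<forall>n. x n \<in> I" using E unfolding bs_wit_def Phat_def by blast
  have sI: "\<forall>x\<in>\<E>. \<forall>n. (\<Union>i\<le>n. x i) \<in> I" using EI ideal_UN_atMost[OF id] by blast
  from key[OF P sI]
  consider (b) F where "F \<in> b_wit" "(card_of F, card_of \<E>) \<in> ordLeq"
    | (a) \<A> where "\<A> \<in> addstar_wit I" "(card_of \<A>, card_of \<E>) \<in> ordLeq"
    | (c) B g where "B \<in> I" "\<forall>n. g n \<le> g (Suc n)" "\<forall>n. n \<le> g n"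
        "\<forall>x\<in>\<E>. \<exists>N. \<forall>n\<ge>N. (\<Union>i\<le>n. x i) \<subseteq> B \<union> {..g n}"
    by blast
  then show "\<exists>E'\<in>inv_min b_wit (addstar_wit I). (card_of E', card_of \<E>) \<in> ordLeq"
  proof cases
    case b then show ?thesis using Inl_card unfolding inv_min_def by blast
  next
    case a then show ?thesis using Inr_card unfolding inv_min_def by blast
  next
    case c
    define S where "S n = B \<union> {..g n}" for n
    have Smono: "S k \<subseteq> S (Suc k)" for k unfolding S_def using c(2)[rule_format, of k] by auto
    have SI: "S k \<in> I" for k unfolding S_def using c idealD(1,3)[OF id] by simp
    define C where "C = disj S"
    have "C \<in> Ppart I"
    proof -
      have "C n \<in> I" for n using disj_sub[of S n] SI idealD(2)[OF id] unfolding C_def by blast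
      moreover have "\<forall>n m. n \<noteq> m \<longrightarrow> C n \<inter> C m = {}" unfolding C_def using disj_disjoint[of S, OF Smono] by blast
      moreover have "(\<Union>n. C n) = UNIV"
      proof -
        have "x \<in> (\<Union>n. C n)" for x
        proof -
          have "x \<in> S x" unfolding S_def using c(3) by auto
          then show ?thesis using disj_Un[of S, OF Smono, of x] unfolding C_def by auto
        qed
        then show ?thesis by blast
      qed
      ultimately show ?thesis unfolding Ppart_def Phat_def by blast
    qed
    then obtain x where x: "x \<in> \<E>" "(\<Union>n. C (Suc n) \<inter> (\<Union>i\<le>n. x i)) \<notin> Fin"
      using E unfolding bs_wit_def by blast
    obtain N where N: "\<forall>n\<ge>N. (\<Union>i\<le>n. x i) \<subseteq> S n" using c x unfolding S_def by blast
    have "(\<Union>n. C (Suc n) \<inter> (\<Union>i\<le>n. x i)) \<subseteq> {..g N}"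
    proof
      fix y assume "y \<in> (\<Union>n. C (Suc n) \<inter> (\<Union>i\<le>n. x i))"
      then obtain n where y: "y \<in> C (Suc n)" "y \<in> (\<Union>i\<le>n. x i)" by blast
      have yS: "y \<notin> S n" using y(1) unfolding C_def disj_def by simp
      show "y \<in> {..g N}"
      proof (cases "N \<le> n")
        case True then show ?thesis using N yS y(2) by blast
      next
        case False
        then have "y \<in> (\<Union>i\<le>N. x i)" using y(2) by auto
        then have "y \<in> S N" using N by blast
        moreover have "y \<notin> B" using yS unfolding S_def by simp
        ultimately show ?thesis unfolding S_def by simp
      qed
    qed
    then have "finite (\<Union>n. C (Suc n) \<inter> (\<Union>i\<le>n. x i))" using finite_subset by blast
    then show ?thesis using x(2) unfolding Fin_def by simp
  qed
qed

definition Gs :: "(nat \<Rightarrow> nat) \<Rightarrow> nat \<Rightarrow> nat" where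
  "Gs f n = (\<Sum>i\<le>n. f i)"

lemma Gs_ge: "f n \<le> Gs f n"
  unfolding Gs_def by (rule member_le_sum) auto

lemma Gs_mono: "n \<le> m \<Longrightarrow> Gs f n \<le> Gs f m"
  unfolding Gs_def by (rule sum_mono2) auto

lemma sigma_le_m:
  assumes P: "P_ideal I"
  shows "inv_le (bsigma_wit I) (inv_min b_wit (addstar_wit I))"
  unfolding inv_le_def
proof
  fix W assume W: "W \<in> inv_min b_wit (addstar_wit I)"
  have id: "ideal_on_nat I" using P unfolding P_ideal_def by blast
  from W consider (b) F where "F \<in> b_wit" "W = Inl ` F" | (a) \<A> where "\<A> \<in> addstar_wit I" "W = Inr ` \<A>"
    unfolding inv_min_def by blast
  then show "\<exists>E'\<in>bsigma_wit I. (card_of E', card_of W) \<in> ordLeq"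
  proof cases
    case b
    define \<E> where "\<E> = (\<lambda>u. \<lambda>n. {..Gs (projl u) n}) ` W"
    have "\<E> \<in> bsigma_wit I"
    proof -
      have "(\<lambda>n. {..Gs (projl u) n}) \<in> Mseq I" for u
      proof -
        have "{..Gs (projl u) k} \<subseteq> {..Gs (projl u) (Suc k)}" for k using Gs_mono[of k "Suc k" "projl u"] by auto
        then show ?thesis unfolding Mseq_def using idealD(3)[OF id] by simp
      qed
      then have "\<E> \<subseteq> Mseq I" unfolding \<E>_def by (rule image_subsetI)
      moreover have "\<exists>E\<in>\<E>. infinite {n. \<not> E n \<subseteq> A n}" if A: "A \<in> Mseq I" for A
      proof -
        have ne: "\<exists>x. x \<notin> A n" for n
        proof -
          have "A n \<in> I" using A unfolding Mseq_def by blast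
          then have "A n \<noteq> UNIV" using idealD(4)[OF id] by auto
          then show ?thesis by auto
        qed
        define h where "h n = (LEAST x. x \<notin> A n)" for n
        have hA: "h n \<notin> A n" for n unfolding h_def using ne[of n] by (rule LeastI_ex)
        obtain f where f: "f \<in> F" "\<not> le_star f h" using b(1) unfolding b_wit_def by blast
        have "infinite {n. \<not> {..Gs f n} \<subseteq> A n}"
          unfolding infinite_nat_iff_unbounded_le
        proof
          fix m
          obtain n where "n \<ge> m" "\<not> f n \<le> h n" using f(2) unfolding le_star_def by blast
          then have "h n \<in> {..Gs f n}" using Gs_ge[of f n] by simp
          then show "\<exists>n\<ge>m. n \<in> {n. \<not> {..Gs f n} \<subseteq> A n}" using hA \<open>n \<ge> m\<close> by blast
        qed
        moreover have "(\<lambda>n. {..Gs f n}) \<in> \<E>" unfolding \<E>_def b(2) by (rule image_eqI[where x="Inl f"]) (auto simp: f(1))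
        ultimately show ?thesis by (rule bexI)
      qed
      ultimately show ?thesis unfolding bsigma_wit_def by blast
    qed
    then show ?thesis by (rule bexI[rotated]) (simp add: \<E>_def card_of_image)
  next
    case a
    define \<E> where "\<E> = (\<lambda>u. \<lambda>n::nat. projr u) ` W"
    have "\<E> \<in> bsigma_wit I"
    proof -
      have "(\<lambda>n::nat. projr u) \<in> Mseq I" if "u \<in> W" for u
        using that a unfolding Mseq_def addstar_wit_def by auto
      then have "\<E> \<subseteq> Mseq I" unfolding \<E>_def by (rule image_subsetI)
      moreover have "\<exists>E\<in>\<E>. infinite {n. \<not> E n \<subseteq> A n}" if A: "A \<in> Mseq I" for A
      proof -
        have cA: "countable (range A)" by simp
        have sA: "range A \<subseteq> I" using A unfolding Mseq_def by auto
        have "\<exists>B\<in>I. \<forall>X\<in>range A. finite (X - B)"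
          using conjunct2[OF P[unfolded P_ideal_def], rule_format, OF conjI[OF cA sA]] .
        then obtain B where B: "B \<in> I" "\<forall>n. finite (A n - B)" by blast
        obtain A0 where A0: "A0 \<in> \<A>" "infinite (A0 - B)" using a(1) B(1) unfolding addstar_wit_def by blast
        have "{n. \<not> A0 \<subseteq> A n} = UNIV"
        proof -
          have "\<not> A0 \<subseteq> A n" for n
          proof
            assume "A0 \<subseteq> A n"
            then have "A0 - B \<subseteq> A n - B" by blast
            then show False using A0(2) B(2) finite_subset by blast
          qed
          then show ?thesis by blast
        qed
        moreover have "(\<lambda>n. A0) \<in> \<E>" unfolding \<E>_def a(2) by (rule image_eqI[where x="Inr A0"]) (auto simp: A0(1))
        moreover have "infinite (UNIV :: nat set)" by (rule infinite_UNIV_nat)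
        ultimately have "infinite {n. \<not> A0 \<subseteq> A n}" by simp
        then show ?thesis using \<open>(\<lambda>n. A0) \<in> \<E>\<close> by (rule bexI)
      qed
      ultimately show ?thesis unfolding bsigma_wit_def by blast
    qed
    then show ?thesis by (rule bexI[rotated]) (simp add: \<E>_def card_of_image)
  qed
qed


lemma s_le_m:
  assumes P: "P_ideal I"
  shows "inv_le (bs_wit Fin I I) (inv_min b_wit (addstar_wit I))"
  unfolding inv_le_def
proof
  fix W assume W: "W \<in> inv_min b_wit (addstar_wit I)"
  have id: "ideal_on_nat I" using P unfolding P_ideal_def by blast
  from W consider (b) F where "F \<in> b_wit" "W = Inl ` F" | (a) \<A> where "\<A> \<in> addstar_wit I" "W = Inr ` \<A>"
    unfolding inv_min_def by blast
  then show "\<exists>E'\<in>bs_wit Fin I I. (card_of E', card_of W) \<in> ordLeq"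
  proof cases
    case b
    define SS where "SS f n = {..Gs f n}" for f n
    have SSm: "SS f n \<subseteq> SS f (Suc n)" for f n unfolding SS_def using Gs_mono[of n "Suc n" f] by auto
    define \<E> where "\<E> = (\<lambda>u. disj (SS (projl u))) ` W"
    have "\<E> \<in> bs_wit Fin I I"
    proof -
      have "disj (SS f) \<in> Phat I" for f
      proof -
        have "disj (SS f) n \<in> I" for n
          using disj_sub[of "SS f" n] idealD(3)[OF id] finite_subset unfolding SS_def by blast
        moreover have "\<forall>n m. n \<noteq> m \<longrightarrow> disj (SS f) n \<inter> disj (SS f) m = {}"
          using disj_disjoint[of "SS f", OF SSm] by blast
        ultimately show ?thesis unfolding Phat_def by blast
      qed
      then have "\<E> \<subseteq> Phat I" unfolding \<E>_def by (intro image_subsetI)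
      moreover have "\<exists>E\<in>\<E>. (\<Union>n. C (Suc n) \<inter> (\<Union>i\<le>n. E i)) \<notin> Fin" if C: "C \<in> Ppart I" for C
      proof -
        have CI: "\<And>i. C i \<in> I" and Cd: "\<And>n m. n \<noteq> m \<Longrightarrow> C n \<inter> C m = {}"
          and Cu: "(\<Union>n. C n) = UNIV" using C unfolding Ppart_def Phat_def by blast+
        define D where "D n = (\<Union>i\<le>n. C i) \<union> {..n}" for n
        have DI: "D n \<in> I" for n
          unfolding D_def using ideal_UN_atMost[OF id CI] idealD(1,3)[OF id] by simp
        have ne: "\<exists>x. x \<notin> D n" for n
        proof -
          have "D n \<noteq> UNIV" using DI[of n] idealD(4)[OF id] by auto
          then show ?thesis by auto
        qed
        define h where "h n = (LEAST x. x \<notin> D n)" for n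
        have hD: "h n \<notin> D n" for n unfolding h_def using ne[of n] by (rule LeastI_ex)
        obtain f where f: "f \<in> F" "\<not> le_star f h" using b(1) unfolding b_wit_def by blast
        define U where "U = (\<Union>n. C (Suc n) \<inter> (\<Union>i\<le>n. disj (SS f) i))"
        have "infinite U"
          unfolding infinite_nat_iff_unbounded_le
        proof
          fix m
          obtain n where n: "n \<ge> m" "\<not> f n \<le> h n" using f(2) unfolding le_star_def by blast
          have hn: "n < h n" using hD[of n] unfolding D_def by auto
          obtain k where k: "h n \<in> C k" using Cu by blast
          have "\<not> k \<le> n" using hD[of n] k unfolding D_def by auto
          then obtain j where j: "k = Suc j" "n \<le> j" by (cases k) auto
          have "h n \<le> Gs f j" using n(2) Gs_ge[of f n] Gs_mono[OF j(2), of f] by simp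
          then have "h n \<in> (\<Union>i\<le>j. disj (SS f) i)" using disj_Un[of "SS f", OF SSm, of j]
            unfolding SS_def by simp
          then have "h n \<in> U" unfolding U_def using k j(1) by blast
          then show "\<exists>x\<ge>m. x \<in> U" using hn n(1) by (intro exI[of _ "h n"]) simp
        qed
        then have "U \<notin> Fin" unfolding Fin_def by simp
        moreover have "disj (SS f) \<in> \<E>" unfolding \<E>_def b(2)
          by (rule image_eqI[where x="Inl f"]) (simp_all add: f(1))
        ultimately show ?thesis unfolding U_def by (rule bexI)
      qed
      ultimately show ?thesis unfolding bs_wit_def by blast
    qed
    then show ?thesis by (rule bexI[rotated]) (simp add: \<E>_def card_of_image)
  next
    case a
    define \<E> where "\<E> = (\<lambda>u. \<lambda>n::nat. if n = 0 then projr u else {}) ` W"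
    have "\<E> \<in> bs_wit Fin I I"
    proof -
      have "(\<lambda>n::nat. if n = 0 then projr u else {}) \<in> Phat I" if "u \<in> W" for u
      proof -
        have "projr u \<in> I" using that a unfolding addstar_wit_def by auto
        then show ?thesis unfolding Phat_def using idealD(3)[OF id] by auto
      qed
      then have "\<E> \<subseteq> Phat I" unfolding \<E>_def by (rule image_subsetI)
      moreover have "\<exists>E\<in>\<E>. (\<Union>n. C (Suc n) \<inter> (\<Union>i\<le>n. E i)) \<notin> Fin" if C: "C \<in> Ppart I" for C
      proof -
        have C0: "C 0 \<in> I" and Cu: "(\<Union>n. C n) = UNIV" using C unfolding Ppart_def Phat_def by blast+
        obtain A0 where A0: "A0 \<in> \<A>" "infinite (A0 - C 0)" using a(1) C0 unfolding addstar_wit_def by blast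
        define E where "E = (\<lambda>n::nat. if n = 0 then A0 else {})"
        have "A0 - C 0 \<subseteq> (\<Union>n. C (Suc n) \<inter> (\<Union>i\<le>n. E i))"
        proof
          fix x assume x: "x \<in> A0 - C 0"
          obtain k where k: "x \<in> C k" using Cu by blast
          then obtain j where j: "k = Suc j" using x by (cases k) auto
          have "x \<in> (\<Union>i\<le>j. E i)" using x unfolding E_def by (intro UN_I[of 0]) auto
          then show "x \<in> (\<Union>n. C (Suc n) \<inter> (\<Union>i\<le>n. E i))" using k j by blast
        qed
        then have "(\<Union>n. C (Suc n) \<inter> (\<Union>i\<le>n. E i)) \<notin> Fin"
          using A0(2) finite_subset unfolding Fin_def by blast
        moreover have "E \<in> \<E>" unfolding \<E>_def a(2) E_def
          using A0(1) by (intro image_eqI[where x="Inr A0"] ext) auto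
        ultimately show ?thesis by (rule bexI)
      qed
      ultimately show ?thesis unfolding bs_wit_def by blast
    qed
    then show ?thesis by (rule bexI[rotated]) (simp add: \<E>_def card_of_image)
  qed
qed

lemma m_le_omega:
  assumes P: "P_ideal I"
  shows "inv_le (inv_min b_wit (addstar_wit I)) (addomega_wit I)"
  unfolding inv_le_def
proof
  fix \<A> assume A: "\<A> \<in> addomega_wit I"
  have id: "ideal_on_nat I" using P unfolding P_ideal_def by blast
  have AI: "\<A> \<subseteq> I" using A unfolding addomega_wit_def by blast
  have "\<A> \<in> addstar_wit I"
  proof -
    have "\<exists>A\<in>\<A>. infinite (A - B)" if B: "B \<in> I" for B
    proof -
      have "\<forall>n. B \<union> {..n} \<in> I" using B idealD(1,3)[OF id] by simp
      moreover have X: "\<forall>Bs. (\<forall>n. Bs n \<in> I) \<longrightarrow> (\<exists>A\<in>\<A>. \<forall>n::nat. \<not> A \<subseteq> Bs n)"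
        using A unfolding addomega_wit_def by blast
      ultimately have "\<exists>A\<in>\<A>. \<forall>n::nat. \<not> A \<subseteq> B \<union> {..n}" using X[rule_format, of "\<lambda>n. B \<union> {..n}"] by blast
      then obtain A0 where A0: "A0 \<in> \<A>" "\<forall>n::nat. \<not> A0 \<subseteq> B \<union> {..n}" by blast
      have "infinite (A0 - B)"
      proof
        assume "finite (A0 - B)"
        then obtain k where "A0 - B \<subseteq> {..<k}" using finite_nat_bounded by blast
        then have "A0 \<subseteq> B \<union> {..k}" by auto
        then show False using A0(2) by blast
      qed
      then show ?thesis using A0(1) by blast
    qed
    then show ?thesis using AI unfolding addstar_wit_def by blast
  qed
  then have "Inr ` \<A> \<in> inv_min b_wit (addstar_wit I)" unfolding inv_min_def by blast
  then show "\<exists>E'\<in>inv_min b_wit (addstar_wit I). (card_of E', card_of \<A>) \<in> ordLeq"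
    using card_of_image by blast
qed

lemma inv_le_trans: "inv_le A B \<Longrightarrow> inv_le B C \<Longrightarrow> inv_le A C"
  unfolding inv_le_def using ordLeq_transitive by blast

theorem corollary5p9:
  fixes I :: "nat set set"
  assumes "P_ideal I"
  shows "inv_eq (bsigma_wit I) (bs_wit Fin I I)
       \<and> inv_eq (bs_wit Fin I I) (inv_min b_wit (addstar_wit I))
       \<and> inv_le (inv_min b_wit (addstar_wit I)) (addomega_wit I)"
proof -
  note ms = m_le_sigma[OF assms] and mS = m_le_s[OF assms] and sm = sigma_le_m[OF assms]
    and Sm = s_le_m[OF assms] and mo = m_le_omega[OF assms]
  show ?thesis unfolding inv_eq_def
    using inv_le_trans[OF sm mS] inv_le_trans[OF Sm ms] Sm mS mo by blast
qed

end
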